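(* Let $G=(V,E)$ be a finite directed acyclic graph with source $S$, run the dissemination protocol below, and fix a slot $t\ge1$ such that the source transmits in slot $t+1$ (i.e. $t+1\le T_S$). Then with probability at least $1-C/q$, where $C$ depends only on $G$, $n$, the rates and $t$, the following implication holds: if $\tau_w\le t$ for every non-source node $w$ and the subspaces $\Pi_w(t)$, $w\in V$, are pairwise distinct, then for every non-source node $u$ and every parent $u_i$ of $u$, the node $u_i$ is the unique node $w\in V$ minimizing $\dim\Pi_w(t)$ among all $w\in V$ with $\Pi^{(u_i)}_u(t+1)\subseteq\Pi_w(t)$. Consequently, the topology of $G$ is uniquely determined by $\{\Pi_w(t)\}_{w\in V}$ together with $\{\Pi^{(u_i)}_u(t+1)\}_{(u_i,u)\in E}$.
   Context: Dissemination protocol: $q$ is a prime power; $G=(V,E)$ is a finite directed acyclic graph without multiple edges, with a source node $S$; each edge $e$ has an integer rate $r_e\ge1$. The source holds $\Pi_S=\mathbb{F}_q^n$ and we set $\Pi_S(s)=\mathbb{F}_q^n$ for all $s$. Time is slotted, $s=1,2,\dots$; vectors sent in slot $s$ are received before the end of slot $s$. In each slot $s\le T_S$ (for some fixed end time $T_S$) the source sends on each outgoing edge $e$ exactly $r_e$ vectors drawn uniformly at random from $\mathbb{F}_q^n$. Each non-source node $v$ has a waiting time $\tau_v$ (possibly random, where the event $\{\tau_v\le s\}$ is determined by what was sent in slots $1,\dots,s$); in each slot $s\ge\tau_v+1$, $v$ sends on each outgoing edge $e$ exactly $r_e$ vectors, each drawn uniformly at random from $\Pi_v(s-1)$. All random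 draws in a slot are mutually independent and independent of the past. $\Pi_v(s)$ is the span of all vectors received by $v$ in slots $1,\dots,s$ ($\Pi_v(0)=\{0\}$), and $\Pi^{(w)}_v(s)$ is the span of all vectors received by $v$ from its parent $w$ in slots $1,\dots,s$. A parent of $u$ is a node $w$ with $(w,u)\in E$. *)

theory Defs
  imports "HOL-Probability.Product_PMF" "HOL-Algebra.Ring" "HOL-Library.FuncSet"
begin

text \<open>Vectors of F_q^n: functions on {0..<n} with values in the carrier of the field
  (extensional). The field is an HOL-Algebra structure on a nat carrier, so that the
  constant C can be chosen before quantifying over all finite fields.\<close>

type_synonym vec = "nat \<Rightarrow> nat"
type_synonym 'v slot = "('v \<times> 'v) \<times> nat \<Rightarrow> vec option"
type_synonym 'v hist = "'v slot list"

definition fullspace :: "nat ring \<Rightarrow> nat \<Rightarrow> vec set" where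
  "fullspace R n = ({0..<n} \<rightarrow>\<^sub>E carrier R)"

definition lincomb :: "nat ring \<Rightarrow> nat \<Rightarrow> (vec \<Rightarrow> nat) \<Rightarrow> vec set \<Rightarrow> vec" where
  "lincomb R n c X = (\<lambda>i\<in>{0..<n}. finsum R (\<lambda>x. mult R (c x) (x i)) X)"

definition vspan :: "nat ring \<Rightarrow> nat \<Rightarrow> vec set \<Rightarrow> vec set" where
  "vspan R n A = {lincomb R n c X | c X. finite X \<and> X \<subseteq> A \<and> c \<in> X \<rightarrow> carrier R}"

definition vdim :: "nat ring \<Rightarrow> nat \<Rightarrow> vec set \<Rightarrow> nat" where
  "vdim R n W = (LEAST k. \<exists>B. finite B \<and> card B = k \<and> B \<subseteq> W \<and> vspan R n B = W)"

text \<open>Vectors received by v from parent w in slots 1..s (slot j is h ! (j-1)).\<close>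
definition received :: "('v \<times> 'v) set \<Rightarrow> ('v \<times> 'v \<Rightarrow> nat) \<Rightarrow> 'v hist \<Rightarrow> 'v \<Rightarrow> 'v \<Rightarrow> nat \<Rightarrow> vec set" where
  "received E r h w v s = {x. \<exists>j<s. \<exists>i<r (w,v). (w,v) \<in> E \<and> j < length h \<and> (h ! j) ((w,v),i) = Some x}"

definition Pi_from :: "nat ring \<Rightarrow> nat \<Rightarrow> ('v \<times> 'v) set \<Rightarrow> ('v \<times> 'v \<Rightarrow> nat) \<Rightarrow> 'v hist \<Rightarrow> 'v \<Rightarrow> 'v \<Rightarrow> nat \<Rightarrow> vec set" where
  "Pi_from R n E r h w v s = vspan R n (received E r h w v s)"

definition Pi_node :: "nat ring \<Rightarrow> nat \<Rightarrow> ('v \<times> 'v) set \<Rightarrow> ('v \<times> 'v \<Rightarrow> nat) \<Rightarrow> 'v \<Rightarrow> 'v hist \<Rightarrow> 'v \<Rightarrow> nat \<Rightarrow> vec set" where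
  "Pi_node R n E r S h v s =
     (if v = S then fullspace R n else vspan R n (\<Union>w. received E r h w v s))"

text \<open>Waiting times as stopping times: \<tau>_v is the least s with stop v s (slots 1..s),
  so the event {\<tau>_v \<le> s} depends only on what was sent in slots 1..s.\<close>
definition tau_le :: "('v \<Rightarrow> nat \<Rightarrow> 'v hist \<Rightarrow> bool) \<Rightarrow> 'v \<Rightarrow> nat \<Rightarrow> 'v hist \<Rightarrow> bool" where
  "tau_le stop v s h = (\<exists>j\<le>s. stop v j (take j h))"

definition transmits :: "'v \<Rightarrow> nat \<Rightarrow> ('v \<Rightarrow> nat \<Rightarrow> 'v hist \<Rightarrow> bool) \<Rightarrow> 'v \<Rightarrow> nat \<Rightarrow> 'v hist \<Rightarrow> bool" where
  "transmits S TS stop v s h = (if v = S then s \<le> TS else tau_le stop v (s - 1) h)"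

definition slot_pmf :: "nat ring \<Rightarrow> nat \<Rightarrow> ('v \<times> 'v) set \<Rightarrow> ('v \<times> 'v \<Rightarrow> nat) \<Rightarrow> 'v \<Rightarrow> nat
    \<Rightarrow> ('v \<Rightarrow> nat \<Rightarrow> 'v hist \<Rightarrow> bool) \<Rightarrow> 'v hist \<Rightarrow> 'v slot pmf" where
  "slot_pmf R n E r S TS stop h =
     Pi_pmf {(e,i). e \<in> E \<and> i < r e} None
       (\<lambda>((v,w),i). if transmits S TS stop v (Suc (length h)) h
                    then map_pmf Some (pmf_of_set (Pi_node R n E r S h v (length h)))
                    else return_pmf None)"

primrec proto :: "nat ring \<Rightarrow> nat \<Rightarrow> ('v \<times> 'v) set \<Rightarrow> ('v \<times> 'v \<Rightarrow> nat) \<Rightarrow> 'v \<Rightarrow> nat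
    \<Rightarrow> ('v \<Rightarrow> nat \<Rightarrow> 'v hist \<Rightarrow> bool) \<Rightarrow> nat \<Rightarrow> 'v hist pmf" where
  "proto R n E r S TS stop 0 = return_pmf []"
| "proto R n E r S TS stop (Suc s) =
     bind_pmf (proto R n E r S TS stop s)
       (\<lambda>h. map_pmf (\<lambda>x. h @ [x]) (slot_pmf R n E r S TS stop h))"

definition unique_min :: "nat ring \<Rightarrow> nat \<Rightarrow> 'v set \<Rightarrow> ('v \<times> 'v) set \<Rightarrow> ('v \<times> 'v \<Rightarrow> nat) \<Rightarrow> 'v
    \<Rightarrow> 'v hist \<Rightarrow> nat \<Rightarrow> vec set \<Rightarrow> 'v \<Rightarrow> bool" where
  "unique_min R n V E r S h t W w =
     (w \<in> V \<and> W \<subseteq> Pi_node R n E r S h w t \<and>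
      (\<forall>w'\<in>V. W \<subseteq> Pi_node R n E r S h w' t \<and> w' \<noteq> w \<longrightarrow>
          vdim R n (Pi_node R n E r S h w t) < vdim R n (Pi_node R n E r S h w' t)))"

definition good_event :: "nat ring \<Rightarrow> nat \<Rightarrow> 'v set \<Rightarrow> ('v \<times> 'v) set \<Rightarrow> ('v \<times> 'v \<Rightarrow> nat) \<Rightarrow> 'v
    \<Rightarrow> ('v \<Rightarrow> nat \<Rightarrow> 'v hist \<Rightarrow> bool) \<Rightarrow> nat \<Rightarrow> 'v hist \<Rightarrow> bool" where
  "good_event R n V E r S stop t h =
     ((\<forall>w\<in>V - {S}. tau_le stop w t h) \<and> inj_on (\<lambda>w. Pi_node R n E r S h w t) V \<longrightarrow>
        (\<forall>u\<in>V - {S}. \<forall>ui. (ui,u) \<in> E \<longrightarrow>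
            unique_min R n V E r S h t (Pi_from R n E r h ui u (Suc t)) ui)
      \<and> (\<forall>u\<in>V. {w. (w,u) \<in> E} =
            (\<lambda>W. THE w. unique_min R n V E r S h t W w) ` {Pi_from R n E r h ui u (Suc t) | ui. (ui,u) \<in> E}))"

end

theory Submission
  imports Defs
begin


definition vzero :: "nat ring \<Rightarrow> nat \<Rightarrow> vec" where
  "vzero R n = (\<lambda>i\<in>{0..<n}. \<zero>\<^bsub>R\<^esub>)"
definition vadd :: "nat ring \<Rightarrow> nat \<Rightarrow> vec \<Rightarrow> vec \<Rightarrow> vec" where
  "vadd R n x y = (\<lambda>i\<in>{0..<n}. x i \<oplus>\<^bsub>R\<^esub> y i)"
definition vsmul :: "nat ring \<Rightarrow> nat \<Rightarrow> nat \<Rightarrow> vec \<Rightarrow> vec" where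
  "vsmul R n a x = (\<lambda>i\<in>{0..<n}. a \<otimes>\<^bsub>R\<^esub> x i)"
definition subsp :: "nat ring \<Rightarrow> nat \<Rightarrow> vec set \<Rightarrow> bool" where
  "subsp R n W = (W \<subseteq> fullspace R n \<and> vzero R n \<in> W \<and> (\<forall>x\<in>W. \<forall>y\<in>W. vadd R n x y \<in> W)
     \<and> (\<forall>a\<in>carrier R. \<forall>x\<in>W. vsmul R n a x \<in> W))"

locale vsp = field R for R :: "nat ring" (structure) + fixes n :: nat
  assumes fin: "finite (carrier R)"
begin

lemma fullspaceD: "x \<in> fullspace R n \<Longrightarrow> i < n \<Longrightarrow> x i \<in> carrier R"
  by (auto simp: fullspace_def)
lemma fullspaceD2: "x \<in> fullspace R n \<Longrightarrow> \<not> i < n \<Longrightarrow> x i = undefined"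
  by (auto simp: fullspace_def PiE_def extensional_def)
lemma fullspace_eqI: "x \<in> fullspace R n \<Longrightarrow> y \<in> fullspace R n \<Longrightarrow> (\<And>i. i < n \<Longrightarrow> x i = y i) \<Longrightarrow> x = y"
  by (rule ext) (metis fullspaceD2)
lemma cz_in: "a \<in> carrier R \<Longrightarrow> z \<in> fullspace R n \<Longrightarrow> i < n \<Longrightarrow> a \<otimes> z i \<in> carrier R"
  by (simp add: fullspaceD)
lemma cz_Pi: "c \<in> X \<rightarrow> carrier R \<Longrightarrow> X \<subseteq> fullspace R n \<Longrightarrow> i < n \<Longrightarrow> (\<lambda>z. c z \<otimes> z i) \<in> X \<rightarrow> carrier R"
  by (auto simp: Pi_iff fullspaceD subset_iff)
lemma finite_fullspace: "finite (fullspace R n)"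
  unfolding fullspace_def by (intro finite_PiE fin) auto

lemma vzero_in: "vzero R n \<in> fullspace R n"
  by (auto simp: vzero_def fullspace_def)
lemma vadd_in: "x \<in> fullspace R n \<Longrightarrow> y \<in> fullspace R n \<Longrightarrow> vadd R n x y \<in> fullspace R n"
  by (auto simp: vadd_def fullspace_def)
lemma vsmul_in: "a \<in> carrier R \<Longrightarrow> x \<in> fullspace R n \<Longrightarrow> vsmul R n a x \<in> fullspace R n"
  by (auto simp: vsmul_def fullspace_def)

lemma lincomb_in:
  assumes "c \<in> X \<rightarrow> carrier R" "X \<subseteq> fullspace R n"
  shows "lincomb R n c X \<in> fullspace R n"
  using assms by (auto simp: lincomb_def fullspace_def intro!: finsum_closed)

lemma lincomb_empty: "lincomb R n c {} = vzero R n"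
  by (simp add: lincomb_def vzero_def)

lemma lincomb_insert:
  assumes "finite X" "x \<notin> X" "c \<in> insert x X \<rightarrow> carrier R" "insert x X \<subseteq> fullspace R n"
  shows "lincomb R n c (insert x X) = vadd R n (vsmul R n (c x) x) (lincomb R n c X)"
proof -
  have "(\<Oplus>y\<in>insert x X. c y \<otimes> y i) = c x \<otimes> x i \<oplus> (\<Oplus>y\<in>X. c y \<otimes> y i)" if "i < n" for i
  proof -
    have xi: "\<And>z. z \<in> insert x X \<Longrightarrow> z i \<in> carrier R" using assms that by (auto simp: fullspaceD)
    have ci: "\<And>z. z \<in> insert x X \<Longrightarrow> c z \<in> carrier R" using assms by auto
    show ?thesis using assms xi ci by (intro finsum_insert) auto
  qed
  then show ?thesis by (auto simp: lincomb_def vadd_def vsmul_def)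
qed

lemma lincomb_ext0:
  assumes "finite Z" "X \<subseteq> Z" "c \<in> X \<rightarrow> carrier R" "Z \<subseteq> fullspace R n"
  shows "lincomb R n (\<lambda>z. if z \<in> X then c z else \<zero>) Z = lincomb R n c X"
proof -
  have "(\<Oplus>z\<in>Z. (if z \<in> X then c z else \<zero>) \<otimes> z i) = (\<Oplus>z\<in>X. c z \<otimes> z i)" if "i < n" for i
  proof -
    have xi: "\<And>z. z \<in> Z \<Longrightarrow> z i \<in> carrier R" using assms that by (auto simp: fullspaceD)
    have ci: "\<And>z. z \<in> X \<Longrightarrow> c z \<in> carrier R" using assms by auto
    show ?thesis using assms xi ci
      by (intro add.finprod_mono_neutral_cong_left[symmetric]) auto
  qed
  then show ?thesis by (auto simp: lincomb_def)
qed

lemma lincomb_add: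
  assumes "finite X" "c \<in> X \<rightarrow> carrier R" "d \<in> X \<rightarrow> carrier R" "X \<subseteq> fullspace R n"
  shows "lincomb R n (\<lambda>z. c z \<oplus> d z) X = vadd R n (lincomb R n c X) (lincomb R n d X)"
proof -
  have "(\<Oplus>z\<in>X. (c z \<oplus> d z) \<otimes> z i) = (\<Oplus>z\<in>X. c z \<otimes> z i) \<oplus> (\<Oplus>z\<in>X. d z \<otimes> z i)" if "i < n" for i
  proof -
    have xi: "\<And>z. z \<in> X \<Longrightarrow> z i \<in> carrier R" using assms that by (auto simp: fullspaceD)
    have ci: "\<And>z. z \<in> X \<Longrightarrow> c z \<in> carrier R" "\<And>z. z \<in> X \<Longrightarrow> d z \<in> carrier R" using assms by auto
    have "(\<Oplus>z\<in>X. (c z \<oplus> d z) \<otimes> z i) = (\<Oplus>z\<in>X. c z \<otimes> z i \<oplus> d z \<otimes> z i)"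
      using xi ci by (intro finsum_cong') (auto simp: l_distr)
    also have "\<dots> = (\<Oplus>z\<in>X. c z \<otimes> z i) \<oplus> (\<Oplus>z\<in>X. d z \<otimes> z i)"
      using xi ci by (intro finsum_addf) auto
    finally show ?thesis .
  qed
  then show ?thesis by (auto simp: lincomb_def vadd_def)
qed

lemma lincomb_smul:
  assumes "finite X" "a \<in> carrier R" "c \<in> X \<rightarrow> carrier R" "X \<subseteq> fullspace R n"
  shows "lincomb R n (\<lambda>z. a \<otimes> c z) X = vsmul R n a (lincomb R n c X)"
proof -
  have "(\<Oplus>z\<in>X. (a \<otimes> c z) \<otimes> z i) = a \<otimes> (\<Oplus>z\<in>X. c z \<otimes> z i)" if "i < n" for i
  proof -
    have xi: "\<And>z. z \<in> X \<Longrightarrow> z i \<in> carrier R" using assms that by (auto simp: fullspaceD)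
    have ci: "\<And>z. z \<in> X \<Longrightarrow> c z \<in> carrier R" using assms by auto
    have "(\<Oplus>z\<in>X. (a \<otimes> c z) \<otimes> z i) = (\<Oplus>z\<in>X. a \<otimes> (c z \<otimes> z i))"
      using assms xi ci by (intro finsum_cong') (auto simp: m_assoc)
    also have "\<dots> = a \<otimes> (\<Oplus>z\<in>X. c z \<otimes> z i)"
      using assms xi ci by (intro finsum_rdistr[symmetric]) auto
    finally show ?thesis .
  qed
  then show ?thesis by (auto simp: lincomb_def vsmul_def)
qed

lemma lincomb_single:
  assumes "x \<in> fullspace R n"
  shows "lincomb R n (\<lambda>_. \<one>) {x} = x"
  using assms by (intro fullspace_eqI lincomb_in) (auto simp: lincomb_def fullspaceD)

lemma in_vspan: "x \<in> A \<Longrightarrow> x \<in> fullspace R n \<Longrightarrow> x \<in> vspan R n A"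
  unfolding vspan_def
  by (rule CollectI, rule exI[of _ "\<lambda>_. \<one>"], rule exI[of _ "{x}"]) (auto simp: lincomb_single)

lemma vspan_mono: "A \<subseteq> B \<Longrightarrow> vspan R n A \<subseteq> vspan R n B"
  unfolding vspan_def by blast

lemma subsp_vspan:
  assumes "A \<subseteq> fullspace R n"
  shows "subsp R n (vspan R n A)"
  unfolding subsp_def
proof (intro conjI ballI)
  show "vspan R n A \<subseteq> fullspace R n"
    using assms by (auto simp: vspan_def intro!: lincomb_in)
  show "vzero R n \<in> vspan R n A"
    unfolding vspan_def by (rule CollectI, rule exI[of _ "\<lambda>_. \<one>"], rule exI[of _ "{}"]) (auto simp: lincomb_empty)
next
  fix x y assume "x \<in> vspan R n A" "y \<in> vspan R n A"
  then obtain c X d Y where x: "x = lincomb R n c X" "finite X" "X \<subseteq> A" "c \<in> X \<rightarrow> carrier R"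
     and y: "y = lincomb R n d Y" "finite Y" "Y \<subseteq> A" "d \<in> Y \<rightarrow> carrier R"
    unfolding vspan_def by blast
  let ?c = "\<lambda>z. if z \<in> X then c z else \<zero>" and ?d = "\<lambda>z. if z \<in> Y then d z else \<zero>"
  have "lincomb R n (\<lambda>z. ?c z \<oplus> ?d z) (X \<union> Y) = vadd R n (lincomb R n ?c (X \<union> Y)) (lincomb R n ?d (X \<union> Y))"
    using x y assms by (intro lincomb_add) auto
  also have "\<dots> = vadd R n x y"
    using x y assms by (subst lincomb_ext0, auto)+
  finally show "vadd R n x y \<in> vspan R n A"
    unfolding vspan_def using x y by (intro CollectI exI[of _ "\<lambda>z. ?c z \<oplus> ?d z"] exI[of _ "X \<union> Y"]) (auto simp: Pi_iff)
next
  fix a x assume "a \<in> carrier R" "x \<in> vspan R n A"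
  then obtain c X where x: "x = lincomb R n c X" "finite X" "X \<subseteq> A" "c \<in> X \<rightarrow> carrier R"
    unfolding vspan_def by blast
  have "lincomb R n (\<lambda>z. a \<otimes> c z) X = vsmul R n a x"
    using x assms \<open>a \<in> carrier R\<close> lincomb_smul by auto
  then show "vsmul R n a x \<in> vspan R n A"
    unfolding vspan_def using x \<open>a \<in> carrier R\<close> by (intro CollectI exI[of _ "\<lambda>z. a \<otimes> c z"] exI[of _ X]) auto
qed

lemma subsp_lincomb:
  assumes "subsp R n W" "finite X" "X \<subseteq> W" "c \<in> X \<rightarrow> carrier R"
  shows "lincomb R n c X \<in> W"
  using assms(2-4)
proof (induction X rule: finite_induct)
  case empty then show ?case using assms(1) by (simp add: lincomb_empty subsp_def)
next
  case (insert x X)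
  have sub: "insert x X \<subseteq> fullspace R n" using insert assms(1) by (auto simp: subsp_def)
  show ?case using insert assms(1) sub
    by (subst lincomb_insert) (auto simp: subsp_def)
qed

lemma vspan_sub: "subsp R n W \<Longrightarrow> A \<subseteq> W \<Longrightarrow> vspan R n A \<subseteq> W"
  unfolding vspan_def by (auto intro!: subsp_lincomb)

lemma vspan_subsp: "subsp R n W \<Longrightarrow> vspan R n W = W"
  using vspan_sub[of W W] in_vspan[of _ W] by (auto simp: subsp_def)

lemma subsp_fullspace: "subsp R n (fullspace R n)"
  by (auto simp: subsp_def vzero_in vadd_in vsmul_in)

lemma subsp_finite: "subsp R n W \<Longrightarrow> finite W"
  using finite_fullspace by (auto simp: subsp_def intro: finite_subset)

lemma vadd_eq_comp: "vadd R n x y i = (if i < n then x i \<oplus> y i else undefined)"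
  by (simp add: vadd_def)
lemma vsmul_eq_comp: "vsmul R n a x i = (if i < n then a \<otimes> x i else undefined)"
  by (simp add: vsmul_def)

lemma coset_card:
  assumes U: "subsp R n U" and W: "subsp R n W" and nsub: "\<not> U \<subseteq> W"
  shows "card (carrier R) * card (U \<inter> W) \<le> card U"
proof -
  obtain v where v: "v \<in> U" "v \<notin> W" using nsub by blast
  have vf: "v \<in> fullspace R n" using U v by (auto simp: subsp_def)
  define f where "f = (\<lambda>(a, y). vadd R n (vsmul R n a v) y)"
  have img: "f ` (carrier R \<times> (U \<inter> W)) \<subseteq> U"
    using U v by (auto simp: f_def subsp_def)
  have inj: "inj_on f (carrier R \<times> (U \<inter> W))"
  proof (rule inj_onI, clarify)
    fix a y b y' assume a: "a \<in> carrier R" and y: "y \<in> U" "y \<in> W" and b: "b \<in> carrier R"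
      and y': "y' \<in> U" "y' \<in> W" and eqf: "f (a, y) = f (b, y')"
    have yf: "y \<in> fullspace R n" "y' \<in> fullspace R n" using y y' U by (auto simp: subsp_def)
    have eq: "a \<otimes> v i \<oplus> y i = b \<otimes> v i \<oplus> y' i" if "i < n" for i
      using fun_cong[OF eqf, of i] that by (simp add: f_def vadd_eq_comp vsmul_eq_comp)
    have ab: "a = b"
    proof (rule ccontr)
      assume "a \<noteq> b"
      define \<delta> where "\<delta> = a \<ominus> b"
      have dc: "\<delta> \<in> carrier R" using a b by (simp add: \<delta>_def)
      have dnz: "\<delta> \<noteq> \<zero>" using a b \<open>a \<noteq> b\<close> unfolding \<delta>_def
        by (metis r_neg1 a_minus_def a_inv_closed add.m_comm l_zero minus_minus r_zero)
      have du: "\<delta> \<in> Units R" using dc dnz field_Units by auto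
      have ic: "inv \<delta> \<in> carrier R" using du by auto
      have ii: "inv \<delta> \<otimes> \<delta> = \<one>" using du by auto
      have "v = vsmul R n (inv \<delta>) (vadd R n y' (vsmul R n (\<ominus> \<one>) y))"
      proof (rule fullspace_eqI[OF vf])
        show "vsmul R n (inv \<delta>) (vadd R n y' (vsmul R n (\<ominus> \<one>) y)) \<in> fullspace R n"
          using ic yf by (intro vsmul_in vadd_in) auto
      next
        fix i assume i: "i < n"
        have vi: "v i \<in> carrier R" "y i \<in> carrier R" "y' i \<in> carrier R"
          using vf yf i by (auto simp: fullspaceD)
        have "\<delta> \<otimes> v i = (a \<otimes> v i \<oplus> y i) \<ominus> (b \<otimes> v i \<oplus> y i)"
          using vi a b unfolding \<delta>_def by algebra
        also have "\<dots> = (b \<otimes> v i \<oplus> y' i) \<ominus> (b \<otimes> v i \<oplus> y i)" using eq[OF i] by simp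
        also have "\<dots> = y' i \<oplus> (\<ominus> \<one>) \<otimes> y i" using vi b by algebra
        finally have dv: "\<delta> \<otimes> v i = y' i \<oplus> (\<ominus> \<one>) \<otimes> y i" .
        have "v i = inv \<delta> \<otimes> (\<delta> \<otimes> v i)" using vi ic dc ii by (simp add: m_assoc[symmetric])
        also have "\<dots> = inv \<delta> \<otimes> (y' i \<oplus> (\<ominus> \<one>) \<otimes> y i)" using dv by simp
        finally show "v i = vsmul R n (inv \<delta>) (vadd R n y' (vsmul R n (\<ominus> \<one>) y)) i"
          using i by (simp add: vadd_eq_comp vsmul_eq_comp)
      qed
      moreover have "vsmul R n (inv \<delta>) (vadd R n y' (vsmul R n (\<ominus> \<one>) y)) \<in> W"
        using W y y' ic by (auto simp: subsp_def)
      ultimately show False using v by simp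
    qed
    have "y = y'"
    proof (rule fullspace_eqI[OF yf])
      fix i assume i: "i < n"
      have vi: "v i \<in> carrier R" "y i \<in> carrier R" "y' i \<in> carrier R"
        using vf yf i by (auto simp: fullspaceD)
      have "y i = (b \<otimes> v i \<oplus> y i) \<ominus> b \<otimes> v i" using vi b by algebra
      also have "\<dots> = (b \<otimes> v i \<oplus> y' i) \<ominus> b \<otimes> v i" using eq[OF i] ab by simp
      also have "\<dots> = y' i" using vi b by algebra
      finally show "y i = y' i" .
    qed
    then show "a = b \<and> y = y'" using ab by simp
  qed
  have "card (carrier R \<times> (U \<inter> W)) \<le> card U"
    using card_inj_on_le[OF inj img subsp_finite[OF U]] .
  then show ?thesis by (simp add: card_cartesian_product)
qed


lemma vdim_min:
  assumes W: "subsp R n W"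
  shows "\<exists>B. finite B \<and> card B = vdim R n W \<and> B \<subseteq> W \<and> vspan R n B = W \<and>
     (\<forall>B'. finite B' \<and> B' \<subseteq> W \<and> vspan R n B' = W \<longrightarrow> card B \<le> card B')"
proof -
  let ?P = "\<lambda>k. \<exists>B. finite B \<and> card B = k \<and> B \<subseteq> W \<and> vspan R n B = W"
  have "?P (card W)" using W subsp_finite vspan_subsp by blast
  then have "?P (vdim R n W)" unfolding vdim_def by (rule LeastI)
  then obtain B where B: "finite B" "card B = vdim R n W" "B \<subseteq> W" "vspan R n B = W" by blast
  have "card B \<le> card B'" if "finite B'" "B' \<subseteq> W" "vspan R n B' = W" for B'
    using that B(2) unfolding vdim_def by (metis (mono_tags, lifting) Least_le)
  with B show ?thesis by blast
qed

lemma lincomb_cong: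
  assumes "\<And>z. z \<in> X \<Longrightarrow> c z = d z" "d \<in> X \<rightarrow> carrier R" "X \<subseteq> fullspace R n"
  shows "lincomb R n c X = lincomb R n d X"
proof -
  have "(\<Oplus>z\<in>X. c z \<otimes> z i) = (\<Oplus>z\<in>X. d z \<otimes> z i)" if "i < n" for i
  proof -
    have xi: "\<And>z. z \<in> X \<Longrightarrow> z i \<in> carrier R" using assms that by (auto simp: fullspaceD)
    show ?thesis using assms xi by (intro finsum_cong') auto
  qed
  then show ?thesis unfolding lincomb_def by (intro restrict_ext) simp
qed

lemma card_q_ge2: "2 \<le> card (carrier R)"
proof -
  have "{\<zero>, \<one>} \<subseteq> carrier R" by auto
  then have "card {\<zero>, \<one>} \<le> card (carrier R)" using fin by (rule card_mono[rotated])
  then show ?thesis by simp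
qed

lemma card_PiE_q: "finite B \<Longrightarrow> card (B \<rightarrow>\<^sub>E carrier R) = card (carrier R) ^ card B"
  by (simp add: card_PiE)

lemma card_vspan_upper:
  assumes "finite B" "B \<subseteq> fullspace R n"
  shows "card (vspan R n B) \<le> card (carrier R) ^ card B"
proof -
  have "vspan R n B \<subseteq> (\<lambda>c. lincomb R n c B) ` (B \<rightarrow>\<^sub>E carrier R)"
  proof
    fix x assume "x \<in> vspan R n B"
    then obtain c X where x: "x = lincomb R n c X" "finite X" "X \<subseteq> B" "c \<in> X \<rightarrow> carrier R"
      unfolding vspan_def by blast
    let ?c = "restrict (\<lambda>z. if z \<in> X then c z else \<zero>) B"
    have "lincomb R n ?c B = lincomb R n (\<lambda>z. if z \<in> X then c z else \<zero>) B"
      using x assms by (intro lincomb_cong) auto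
    also have "\<dots> = x" using x assms by (simp add: lincomb_ext0)
    finally show "x \<in> (\<lambda>c. lincomb R n c B) ` (B \<rightarrow>\<^sub>E carrier R)"
      using x by (intro image_eqI[of _ _ ?c]) (auto simp: Pi_iff)
  qed
  then have "card (vspan R n B) \<le> card (B \<rightarrow>\<^sub>E carrier R)"
    using assms fin by (intro surj_card_le) (auto intro: finite_PiE)
  then show ?thesis by (simp only: card_PiE_q[OF assms(1)])
qed


lemma minimal_indep:
  assumes W: "subsp R n W" and B: "finite B" "B \<subseteq> W" "vspan R n B = W"
    and minB: "\<forall>B'. finite B' \<and> B' \<subseteq> W \<and> vspan R n B' = W \<longrightarrow> card B \<le> card B'"
  shows "inj_on (\<lambda>c. lincomb R n c B) (B \<rightarrow>\<^sub>E carrier R)"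
proof (rule inj_onI, rule ccontr)
  fix c d assume c: "c \<in> B \<rightarrow>\<^sub>E carrier R" and d: "d \<in> B \<rightarrow>\<^sub>E carrier R"
    and eqcd: "lincomb R n c B = lincomb R n d B" and ne: "c \<noteq> d"
  have Bf: "B \<subseteq> fullspace R n" using W B by (auto simp: subsp_def)
  have "\<exists>b0\<in>B. c b0 \<noteq> d b0"
  proof (rule ccontr)
    assume "\<not> (\<exists>b0\<in>B. c b0 \<noteq> d b0)"
    then have "c = d" using c d by (intro PiE_ext[of c B _ d]) auto
    with ne show False ..
  qed
  then obtain b0 where b0: "b0 \<in> B" "c b0 \<noteq> d b0" by blast
  define B' where "B' = B - {b0}"
  have Bins: "B = insert b0 B'" "b0 \<notin> B'" "finite B'" using b0 B by (auto simp: B'_def)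
  have cc: "\<And>z. z \<in> B \<Longrightarrow> c z \<in> carrier R" "\<And>z. z \<in> B \<Longrightarrow> d z \<in> carrier R"
    using c d by auto
  define \<delta> where "\<delta> = c b0 \<ominus> d b0"
  have dc: "\<delta> \<in> carrier R" using cc b0 by (simp add: \<delta>_def)
  have dnz: "\<delta> \<noteq> \<zero>" using cc b0 unfolding \<delta>_def
    by (metis r_neg1 a_minus_def a_inv_closed add.m_comm l_zero minus_minus r_zero)
  have du: "\<delta> \<in> Units R" using dc dnz field_Units by auto
  have ic: "inv \<delta> \<in> carrier R" using du by auto
  have ii: "inv \<delta> \<otimes> \<delta> = \<one>" using du by auto
  define e where "e = (\<lambda>z. inv \<delta> \<otimes> (d z \<oplus> (\<ominus> \<one>) \<otimes> c z))"
  have ec: "e \<in> B' \<rightarrow> carrier R" using cc ic by (auto simp: e_def B'_def)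
  have "lincomb R n e B' = b0"
  proof (rule fullspace_eqI)
    show "lincomb R n e B' \<in> fullspace R n" using ec Bf by (intro lincomb_in) (auto simp: B'_def)
    show "b0 \<in> fullspace R n" using Bf b0 by auto
  next
    fix i assume i: "i < n"
    have zi: "\<And>z. z \<in> B \<Longrightarrow> z i \<in> carrier R" using Bf i by (auto simp: fullspaceD)
    define Sc where "Sc = (\<Oplus>z\<in>B'. c z \<otimes> z i)"
    define Sd where "Sd = (\<Oplus>z\<in>B'. d z \<otimes> z i)"
    have Scc: "Sc \<in> carrier R" "Sd \<in> carrier R" using zi cc unfolding Sc_def Sd_def
      by (auto intro!: finsum_closed simp: Bins)
    have "(\<Oplus>z\<in>B. c z \<otimes> z i) = c b0 \<otimes> b0 i \<oplus> Sc"
      unfolding Sc_def Bins(1) using Bins zi cc by (intro finsum_insert) auto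
    moreover have "(\<Oplus>z\<in>B. d z \<otimes> z i) = d b0 \<otimes> b0 i \<oplus> Sd"
      unfolding Sd_def Bins(1) using Bins zi cc by (intro finsum_insert) auto
    moreover have "(\<Oplus>z\<in>B. c z \<otimes> z i) = (\<Oplus>z\<in>B. d z \<otimes> z i)"
      using fun_cong[OF eqcd, of i] i by (simp add: lincomb_def)
    ultimately have eq: "c b0 \<otimes> b0 i \<oplus> Sc = d b0 \<otimes> b0 i \<oplus> Sd" by simp
    have b0c: "b0 i \<in> carrier R" "c b0 \<in> carrier R" "d b0 \<in> carrier R" using zi cc b0 by auto
    have "\<delta> \<otimes> b0 i = (c b0 \<otimes> b0 i \<oplus> Sc) \<ominus> (d b0 \<otimes> b0 i \<oplus> Sc)"
      using b0c Scc unfolding \<delta>_def by algebra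
    also have "\<dots> = (d b0 \<otimes> b0 i \<oplus> Sd) \<ominus> (d b0 \<otimes> b0 i \<oplus> Sc)" using eq by simp
    also have "\<dots> = Sd \<oplus> (\<ominus> \<one>) \<otimes> Sc" using b0c Scc by algebra
    finally have db: "\<delta> \<otimes> b0 i = Sd \<oplus> (\<ominus> \<one>) \<otimes> Sc" .
    have zi': "\<And>z. z \<in> B' \<Longrightarrow> z i \<in> carrier R" "\<And>z. z \<in> B' \<Longrightarrow> c z \<in> carrier R"
      "\<And>z. z \<in> B' \<Longrightarrow> d z \<in> carrier R" using zi cc Bins by auto
    have "(\<Oplus>z\<in>B'. e z \<otimes> z i) = (\<Oplus>z\<in>B'. inv \<delta> \<otimes> (d z \<otimes> z i \<oplus> (\<ominus> \<one>) \<otimes> (c z \<otimes> z i)))"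
    proof (rule finsum_cong')
      show "(\<lambda>z. inv \<delta> \<otimes> (d z \<otimes> z i \<oplus> (\<ominus> \<one>) \<otimes> (c z \<otimes> z i))) \<in> B' \<rightarrow> carrier R"
        using zi' ic by auto
      fix z assume "z \<in> B'"
      then have "z i \<in> carrier R" "c z \<in> carrier R" "d z \<in> carrier R" using zi' by auto
      then show "e z \<otimes> z i = inv \<delta> \<otimes> (d z \<otimes> z i \<oplus> (\<ominus> \<one>) \<otimes> (c z \<otimes> z i))"
        unfolding e_def using ic by algebra
    qed simp
    also have "\<dots> = inv \<delta> \<otimes> (\<Oplus>z\<in>B'. d z \<otimes> z i \<oplus> (\<ominus> \<one>) \<otimes> (c z \<otimes> z i))"
      using zi' ic Bins by (intro finsum_rdistr[symmetric]) auto
    also have "(\<Oplus>z\<in>B'. d z \<otimes> z i \<oplus> (\<ominus> \<one>) \<otimes> (c z \<otimes> z i)) = Sd \<oplus> (\<Oplus>z\<in>B'. (\<ominus> \<one>) \<otimes> (c z \<otimes> z i))"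
      unfolding Sd_def using zi' by (intro finsum_addf) auto
    also have "(\<Oplus>z\<in>B'. (\<ominus> \<one>) \<otimes> (c z \<otimes> z i)) = (\<ominus> \<one>) \<otimes> Sc"
      unfolding Sc_def using zi' Bins by (intro finsum_rdistr[symmetric]) auto
    also have "inv \<delta> \<otimes> (Sd \<oplus> (\<ominus> \<one>) \<otimes> Sc) = inv \<delta> \<otimes> (\<delta> \<otimes> b0 i)" using db by simp
    also have "\<dots> = b0 i" using ic dc ii b0c by (simp add: m_assoc[symmetric])
    finally show "lincomb R n e B' i = b0 i" using i by (simp add: lincomb_def)
  qed
  note lb = this
  have B'f: "B' \<subseteq> fullspace R n" using Bf by (auto simp: B'_def)
  have "b0 \<in> vspan R n B'"
    unfolding vspan_def by (rule CollectI, rule exI[of _ e], rule exI[of _ B']) (use lb ec Bins in simp)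
  then have "B \<subseteq> vspan R n B'"
    using Bins Bf in_vspan[of _ B'] by auto
  then have "vspan R n B \<subseteq> vspan R n B'"
    by (rule vspan_sub[OF subsp_vspan[OF B'f]])
  then have "W \<subseteq> vspan R n B'" using B(3) by simp
  moreover have "vspan R n B' \<subseteq> W" using B(3) vspan_mono[of B' B] by (auto simp: B'_def)
  ultimately have eqW: "vspan R n B' = W" by blast
  have "B' \<subseteq> W" using B(2) by (auto simp: B'_def)
  then have "card B \<le> card B'" using minB Bins(3) eqW by blast
  then show False using Bins by simp
qed


lemma card_subsp_eq:
  assumes W: "subsp R n W"
  shows "card W = card (carrier R) ^ vdim R n W"
proof -
  obtain B where B: "finite B" "card B = vdim R n W" "B \<subseteq> W" "vspan R n B = W"
     and minB: "\<forall>B'. finite B' \<and> B' \<subseteq> W \<and> vspan R n B' = W \<longrightarrow> card B \<le> card B'"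
    using vdim_min[OF W] by blast
  have Bf: "B \<subseteq> fullspace R n" using W B by (auto simp: subsp_def)
  have up: "card W \<le> card (carrier R) ^ vdim R n W"
    using card_vspan_upper[OF B(1) Bf] B by simp
  have "(\<lambda>c. lincomb R n c B) ` (B \<rightarrow>\<^sub>E carrier R) \<subseteq> W"
  proof
    fix x assume "x \<in> (\<lambda>c. lincomb R n c B) ` (B \<rightarrow>\<^sub>E carrier R)"
    then obtain c where "c \<in> B \<rightarrow>\<^sub>E carrier R" "x = lincomb R n c B" by blast
    then have "x \<in> vspan R n B" unfolding vspan_def
      by (intro CollectI exI[of _ c] exI[of _ B]) (use B(1) in auto)
    then show "x \<in> W" using B(4) by simp
  qed
  then have "card (B \<rightarrow>\<^sub>E carrier R) \<le> card W"
    using card_inj_on_le[OF minimal_indep[OF W B(1,3,4) minB]] subsp_finite[OF W] by blast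
  then have lo: "card (carrier R) ^ vdim R n W \<le> card W" by (simp only: card_PiE_q[OF B(1)] B(2))
  show ?thesis by (rule antisym[OF up lo])
qed

lemma vdim_strict:
  assumes "subsp R n W1" "subsp R n W2" "W1 \<subset> W2"
  shows "vdim R n W1 < vdim R n W2"
proof -
  have "card W1 < card W2" using assms subsp_finite by (intro psubset_card_mono) auto
  then have "card (carrier R) ^ vdim R n W1 < card (carrier R) ^ vdim R n W2"
    by (simp only: card_subsp_eq[OF assms(1)] card_subsp_eq[OF assms(2)])
  moreover have "1 < card (carrier R)" using card_q_ge2 by simp
  ultimately show ?thesis using power_less_imp_less_exp by blast
qed


end



definition hinv :: "nat ring \<Rightarrow> nat \<Rightarrow> ('v \<times> 'v) set \<Rightarrow> ('v \<times> 'v \<Rightarrow> nat) \<Rightarrow> 'v \<Rightarrow> 'v hist \<Rightarrow> bool" where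
  "hinv R n E r S h = (\<forall>j<length h. \<forall>e i y. (h!j) (e,i) = Some y \<longrightarrow>
      y \<in> Pi_node R n E r S h (fst e) j \<and> y \<in> fullspace R n)"

lemma received_take: "received E r h w v s = received E r (take s h) w v s"
  unfolding received_def by (intro Collect_cong iffI; (elim exE conjE)?; fastforce simp: nth_take)

lemma Pi_node_take: "Pi_node R n E r S h v s = Pi_node R n E r S (take s h) v s"
  unfolding Pi_node_def by (simp add: received_take[of E r h])

lemma received_app: "s \<le> length h \<Longrightarrow> received E r (h @ xs) w v s = received E r h w v s"
  by (metis received_take take_append diff_is_0_eq take0 append_Nil2)

lemma Pi_node_app: "s \<le> length h \<Longrightarrow> Pi_node R n E r S (h @ xs) v s = Pi_node R n E r S h v s"
  by (metis Pi_node_take take_append diff_is_0_eq take0 append_Nil2)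

lemma received_mono: "s \<le> s' \<Longrightarrow> received E r h w v s \<subseteq> received E r h w v s'"
  unfolding received_def by (rule Collect_mono) (meson less_le_trans)

lemma tau_le_app: "s \<le> length h \<Longrightarrow> tau_le stop v s (h @ xs) = tau_le stop v s h"
  unfolding tau_le_def by (intro ex_cong1) auto

context vsp begin

lemma Pi_node_mono: "s \<le> s' \<Longrightarrow> Pi_node R n E r S h v s \<subseteq> Pi_node R n E r S h v s'"
proof -
  assume ss: "s \<le> s'"
  have "(\<Union>w. received E r h w v s) \<subseteq> (\<Union>w. received E r h w v s')"
    using received_mono[OF ss] by (rule UN_mono[OF subset_refl])
  then show ?thesis unfolding Pi_node_def using vspan_mono by simp
qed

lemma hinv_received_full:
  assumes "hinv R n E r S h" shows "received E r h w v s \<subseteq> fullspace R n"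
proof
  fix y assume "y \<in> received E r h w v s"
  then obtain j i where "j < length h" "(h!j) ((w,v),i) = Some y" unfolding received_def by blast
  then show "y \<in> fullspace R n" using assms unfolding hinv_def by blast
qed

lemma hinv_subsp:
  assumes "hinv R n E r S h" shows "subsp R n (Pi_node R n E r S h v s)"
proof (cases "v = S")
  case True then show ?thesis by (simp add: Pi_node_def subsp_fullspace)
next
  case False
  have "(\<Union>w. received E r h w v s) \<subseteq> fullspace R n"
    using hinv_received_full[OF assms] by blast
  then show ?thesis using False by (simp add: Pi_node_def subsp_vspan)
qed

lemma subsp_ne: "subsp R n W \<Longrightarrow> W \<noteq> {}"
  by (auto simp: subsp_def)

lemma finite_I: "finite E \<Longrightarrow> finite {(e, i). e \<in> E \<and> i < (r::'v \<times> 'v \<Rightarrow> nat) e}"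
proof -
  assume "finite E"
  moreover have "{(e, i). e \<in> E \<and> i < r e} = (SIGMA e:E. {..<r e})" by auto
  ultimately show ?thesis by simp
qed

lemma slot_support:
  assumes fE: "finite E" and x: "x \<in> set_pmf (slot_pmf R n E r S TS stop h)" and hi: "hinv R n E r S h"
  shows "x ((v,w),i) = Some y \<Longrightarrow> (v,w) \<in> E \<and> i < r (v,w) \<and> y \<in> Pi_node R n E r S h v (length h)"
    and "(v,w) \<in> E \<Longrightarrow> i < r (v,w) \<Longrightarrow> transmits S TS stop v (Suc (length h)) h \<Longrightarrow> \<exists>y. x ((v,w),i) = Some y"
proof -
  let ?I = "{(e, i). e \<in> E \<and> i < r e}"
  let ?F = "(\<lambda>((v,w),i). if transmits S TS stop v (Suc (length h)) h
                    then map_pmf Some (pmf_of_set (Pi_node R n E r S h v (length h)))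
                    else return_pmf None)"
  have xs: "x \<in> PiE_dflt ?I None (set_pmf \<circ> ?F)"
    using x set_Pi_pmf[OF finite_I[OF fE, of r], where dflt=None and p="?F"] by (simp add: slot_pmf_def)
  have P: "finite (Pi_node R n E r S h v (length h))" "Pi_node R n E r S h v (length h) \<noteq> {}"
    using hinv_subsp[OF hi] subsp_finite subsp_ne by blast+
  have k: "x ((v,w),i) \<in> set_pmf (?F ((v,w),i))" if "(v,w) \<in> E" "i < r (v,w)"
    using xs that by (auto simp: PiE_dflt_def)
  have kn: "x ((v,w),i) = None" if "\<not> ((v,w) \<in> E \<and> i < r (v,w))"
    using xs that by (auto simp: PiE_dflt_def)
  show "x ((v,w),i) = Some y \<Longrightarrow> (v,w) \<in> E \<and> i < r (v,w) \<and> y \<in> Pi_node R n E r S h v (length h)"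
  proof -
    assume s: "x ((v,w),i) = Some y"
    then have ei: "(v,w) \<in> E \<and> i < r (v,w)" using kn by fastforce
    then show ?thesis using k[of ] s P by (auto split: if_splits)
  qed
  show "(v,w) \<in> E \<Longrightarrow> i < r (v,w) \<Longrightarrow> transmits S TS stop v (Suc (length h)) h \<Longrightarrow> \<exists>y. x ((v,w),i) = Some y"
    using k P by auto
qed

lemma proto_support:
  assumes fE: "finite E"
  shows "h \<in> set_pmf (proto R n E r S TS stop s) \<Longrightarrow> length h = s \<and> hinv R n E r S h"
proof (induction s arbitrary: h)
  case 0 then show ?case by (simp add: hinv_def)
next
  case (Suc s)
  then obtain h0 x where h0: "h0 \<in> set_pmf (proto R n E r S TS stop s)"
    and x: "x \<in> set_pmf (slot_pmf R n E r S TS stop h0)" and h: "h = h0 @ [x]"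
    by auto
  have l: "length h0 = s" and hi: "hinv R n E r S h0" using Suc.IH[OF h0] by auto
  have "hinv R n E r S h"
    unfolding hinv_def
  proof (intro allI impI)
    fix j e i y assume j: "j < length h" and hy: "(h ! j) (e, i) = Some y"
    obtain v w where e: "e = (v,w)" by (cases e)
    show "y \<in> Pi_node R n E r S h (fst e) j \<and> y \<in> fullspace R n"
    proof (cases "j < length h0")
      case True
      then have "(h0 ! j) (e, i) = Some y" using hy h by (simp add: nth_append)
      then have "y \<in> Pi_node R n E r S h0 (fst e) j \<and> y \<in> fullspace R n" using hi True unfolding hinv_def by blast
      then show ?thesis using True h Pi_node_app[of j h0] by simp
    next
      case False
      then have jl: "j = length h0" using j h by simp
      then have "x ((v,w), i) = Some y" using hy h e by simp
      then have "y \<in> Pi_node R n E r S h0 v (length h0)" using slot_support(1)[OF fE x hi] by blast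
      moreover have "Pi_node R n E r S h0 v (length h0) \<subseteq> fullspace R n"
        using hinv_subsp[OF hi] by (simp add: subsp_def)
      ultimately show ?thesis using jl h e Pi_node_app[of "length h0" h0] by auto
    qed
  qed
  then show ?case using h l by simp
qed

end



context vsp begin

lemma unique_min_the:
  assumes um: "unique_min R n V E r S h t W w"
  shows "(THE w'. unique_min R n V E r S h t W w') = w"
proof (rule the_equality[where P="\<lambda>w'. unique_min R n V E r S h t W w'", OF um])
  fix w' assume um': "unique_min R n V E r S h t W w'"
  show "w' = w"
  proof (rule ccontr)
    assume ne: "w' \<noteq> w"
    have "vdim R n (Pi_node R n E r S h w t) < vdim R n (Pi_node R n E r S h w' t)"
      using um um' ne unfolding unique_min_def by blast
    moreover have "vdim R n (Pi_node R n E r S h w' t) < vdim R n (Pi_node R n E r S h w t)"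
      using um um' ne unfolding unique_min_def by blast
    ultimately show False by simp
  qed
qed

lemma slot_good:
  assumes V: "finite V" "E \<subseteq> V \<times> V" "S \<in> V" "\<forall>e\<in>E. snd e \<noteq> S" "\<forall>e\<in>E. 1 \<le> r e" "Suc t \<le> TS"
    and hl: "length h = t" and hi: "hinv R n E r S h"
    and x: "x \<in> set_pmf (slot_pmf R n E r S TS stop h)"
    and nx: "\<forall>e\<in>E. \<forall>w\<in>V. \<not> Pi_node R n E r S h (fst e) t \<subseteq> Pi_node R n E r S h w t \<longrightarrow>
               \<not> (\<exists>y. x (e,0) = Some y \<and> y \<in> Pi_node R n E r S h w t)"
  shows "good_event R n V E r S stop t (h @ [x])"
proof -
  have fE: "finite E" using V(1,2) finite_subset by blast
  define PN where "PN = (\<lambda>w. Pi_node R n E r S h w t)"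
  have PNeq: "(\<lambda>w. Pi_node R n E r S (h@[x]) w t) = PN"
    unfolding PN_def using Pi_node_app[of t h] hl by auto
  have PNeq': "\<And>w. Pi_node R n E r S (h@[x]) w t = PN w"
    unfolding PN_def using Pi_node_app[of t h] hl by auto
  have taueq: "\<And>w. tau_le stop w t (h@[x]) = tau_le stop w t h"
    using tau_le_app[of t h] hl by simp
  have sub: "\<And>w. subsp R n (PN w)" unfolding PN_def using hinv_subsp[OF hi] by blast
  have UM: "unique_min R n V E r S (h@[x]) t (Pi_from R n E r (h@[x]) ui u (Suc t)) ui"
    if tau: "\<forall>w\<in>V-{S}. tau_le stop w t h" and inj: "inj_on PN V" and e: "(ui,u) \<in> E" for ui u
  proof -
    let ?W = "Pi_from R n E r (h@[x]) ui u (Suc t)"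
    have uiV: "ui \<in> V" using e V by auto
    have recsub: "received E r (h@[x]) ui u (Suc t) \<subseteq> PN ui"
    proof
      fix y assume "y \<in> received E r (h @ [x]) ui u (Suc t)"
      then obtain j i where j: "j < Suc t" "i < r (ui,u)" "j < length (h@[x])"
          "((h@[x])!j) ((ui,u),i) = Some y"
        unfolding received_def by blast
      show "y \<in> PN ui"
      proof (cases "j < t")
        case True
        then have "(h!j) ((ui,u),i) = Some y" using j hl by (simp add: nth_append)
        then have "y \<in> Pi_node R n E r S h (fst (ui,u)) j" using hi True hl unfolding hinv_def by blast
        moreover have "j \<le> t" using True by simp
        ultimately show ?thesis using Pi_node_mono[of j t E r S h ui] unfolding PN_def by auto
      next
        case False
        then have "j = t" using j by simp
        then have "x ((ui,u),i) = Some y" using j hl nth_append_length[of h x] by simp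
        then show ?thesis using slot_support(1)[OF fE x hi] hl unfolding PN_def by blast
      qed
    qed
    have Wsub: "?W \<subseteq> PN ui" unfolding Pi_from_def by (rule vspan_sub[OF sub recsub])
    have trans: "transmits S TS stop ui (Suc (length h)) h"
      using tau uiV V(6) hl by (auto simp: transmits_def)
    have r0: "0 < r (ui,u)" using V(5) e by fastforce
    obtain y0 where y0: "x ((ui,u),0) = Some y0" using slot_support(2)[OF fE x hi e r0 trans] by blast
    have y0rec: "y0 \<in> received E r (h@[x]) ui u (Suc t)"
      unfolding received_def using y0 e r0 hl nth_append_length[of h x] by (intro CollectI exI[of _ t]) auto
    have y0f: "y0 \<in> fullspace R n" using recsub y0rec sub[of ui] by (auto simp: subsp_def)
    have y0W: "y0 \<in> ?W" unfolding Pi_from_def by (rule in_vspan[OF y0rec y0f])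
    show ?thesis unfolding unique_min_def PNeq'
    proof (intro conjI ballI impI)
      show "ui \<in> V" by (rule uiV)
      show "?W \<subseteq> PN ui" by (rule Wsub)
      fix w' assume w'V: "w' \<in> V" and w': "?W \<subseteq> PN w' \<and> w' \<noteq> ui"
      show "vdim R n (PN ui) < vdim R n (PN w')"
      proof (cases "PN ui \<subseteq> PN w'")
        case True
        have "PN ui \<noteq> PN w'" using inj w' w'V uiV by (metis inj_onD)
        then have "PN ui \<subset> PN w'" using True by blast
        then show ?thesis using vdim_strict sub by blast
      next
        case False
        then have "\<not> (\<exists>y. x ((ui,u),0) = Some y \<and> y \<in> PN w')"
          using nx e w'V unfolding PN_def by fastforce
        moreover have "y0 \<in> PN w'" using y0W w' by blast
        ultimately show ?thesis using y0 by blast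
      qed
    qed
  qed
  have main: "(\<forall>u\<in>V - {S}. \<forall>ui. (ui,u) \<in> E \<longrightarrow>
            unique_min R n V E r S (h@[x]) t (Pi_from R n E r (h@[x]) ui u (Suc t)) ui)
      \<and> (\<forall>u\<in>V. {w. (w,u) \<in> E} =
            (\<lambda>W. THE w. unique_min R n V E r S (h@[x]) t W w) ` {Pi_from R n E r (h@[x]) ui u (Suc t) | ui. (ui,u) \<in> E})"
    if tau: "\<forall>w\<in>V-{S}. tau_le stop w t h" and inj: "inj_on PN V"
  proof (intro conjI ballI allI impI)
    fix u ui assume "(ui,u) \<in> E"
    then show "unique_min R n V E r S (h@[x]) t (Pi_from R n E r (h@[x]) ui u (Suc t)) ui"
      using UM[OF tau inj] by blast
  next
    fix u
    have "{Pi_from R n E r (h@[x]) ui u (Suc t) | ui. (ui,u) \<in> E} =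
          (\<lambda>ui. Pi_from R n E r (h@[x]) ui u (Suc t)) ` {w. (w,u) \<in> E}" by blast
    then have "(\<lambda>W. THE w. unique_min R n V E r S (h@[x]) t W w) ` {Pi_from R n E r (h@[x]) ui u (Suc t) | ui. (ui,u) \<in> E}
        = (\<lambda>ui. THE w. unique_min R n V E r S (h@[x]) t (Pi_from R n E r (h@[x]) ui u (Suc t)) w) ` {w. (w,u) \<in> E}"
      by (simp add: image_image)
    also have "\<dots> = (\<lambda>ui. ui) ` {w. (w,u) \<in> E}"
      by (intro image_cong refl unique_min_the UM[OF tau inj]) simp
    finally show "{w. (w,u) \<in> E} =
            (\<lambda>W. THE w. unique_min R n V E r S (h@[x]) t W w) ` {Pi_from R n E r (h@[x]) ui u (Suc t) | ui. (ui,u) \<in> E}"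
      by simp
  qed
  show ?thesis unfolding good_event_def taueq PNeq' using main by blast
qed

end



lemma bind_pmf_prob_le:
  fixes c :: real
  assumes "c \<ge> 0" "\<And>x. x \<in> set_pmf M \<Longrightarrow> measure_pmf.prob (f x) A \<le> c"
  shows "measure_pmf.prob (bind_pmf M f) A \<le> c"
proof -
  have "ennreal (measure_pmf.prob (bind_pmf M f) A) = emeasure (measure_pmf (bind_pmf M f)) A"
    by (simp add: measure_pmf.emeasure_eq_measure)
  also have "\<dots> = (\<integral>\<^sup>+x. emeasure (measure_pmf (f x)) A \<partial>measure_pmf M)" by simp
  also have "\<dots> \<le> (\<integral>\<^sup>+x. ennreal c \<partial>measure_pmf M)"
    using assms(2) by (intro nn_integral_mono_AE) (auto intro!: AE_pmfI ennreal_leI simp: measure_pmf.emeasure_eq_measure)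
  also have "\<dots> = ennreal c" by (simp add: measure_pmf.emeasure_space_1)
  finally show ?thesis using assms(1) by simp
qed

context vsp begin

lemma prob_pair:
  assumes fE: "finite E" and e: "e \<in> E" "1 \<le> r e" and hi: "hinv R n E r S h" and hl: "length h = t"
    and ns: "\<not> Pi_node R n E r S h (fst e) t \<subseteq> Pi_node R n E r S h w t"
  shows "measure_pmf.prob (slot_pmf R n E r S TS stop h)
           {x. \<exists>y. x (e,0) = Some y \<and> y \<in> Pi_node R n E r S h w t} \<le> 1 / real (card (carrier R))"
proof -
  obtain a b where ab: "e = (a,b)" by (cases e)
  let ?I = "{(e, i). e \<in> E \<and> i < r e}"
  let ?F = "(\<lambda>((v,w),i). if transmits S TS stop v (Suc (length h)) h
                    then map_pmf Some (pmf_of_set (Pi_node R n E r S h v (length h)))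
                    else return_pmf None)"
  let ?U = "Pi_node R n E r S h a t"
  let ?P = "Pi_node R n E r S h w t"
  have k: "((a,b),0) \<in> ?I" using e ab by auto
  have "measure_pmf.prob (slot_pmf R n E r S TS stop h) {x. \<exists>y. x (e,0) = Some y \<and> y \<in> ?P}
      = measure_pmf.prob (map_pmf (\<lambda>f. f ((a,b),0)) (slot_pmf R n E r S TS stop h)) {z. \<exists>y. z = Some y \<and> y \<in> ?P}"
    by (simp add: ab vimage_def)
  also have "map_pmf (\<lambda>f. f ((a,b),0)) (slot_pmf R n E r S TS stop h) = ?F ((a,b),0)"
    unfolding slot_pmf_def using Pi_pmf_component[OF finite_I[OF fE, of r], of "((a,b),0)" None ?F] k by simp
  finally have eq: "measure_pmf.prob (slot_pmf R n E r S TS stop h) {x. \<exists>y. x (e,0) = Some y \<and> y \<in> ?P}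
      = measure_pmf.prob (?F ((a,b),0)) {z. \<exists>y. z = Some y \<and> y \<in> ?P}" .
  have qpos: "0 < real (card (carrier R))" using card_q_ge2 by simp
  show ?thesis
  proof (cases "transmits S TS stop a (Suc (length h)) h")
    case False
    then show ?thesis using eq qpos by simp
  next
    case True
    have subU: "subsp R n ?U" "subsp R n ?P" using hinv_subsp[OF hi] by blast+
    have Uf: "finite ?U" "?U \<noteq> {}" using subU subsp_finite subsp_ne by blast+
    have "measure_pmf.prob (?F ((a,b),0)) {z. \<exists>y. z = Some y \<and> y \<in> ?P}
        = measure_pmf.prob (pmf_of_set ?U) ?P"
      using True hl by (simp add: vimage_def)
    also have "\<dots> = real (card (?U \<inter> ?P)) / real (card ?U)"
      using Uf by (simp add: measure_pmf_of_set)
    also have "\<dots> \<le> 1 / real (card (carrier R))"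
    proof -
      have c: "card (carrier R) * card (?U \<inter> ?P) \<le> card ?U"
        using coset_card[OF subU] ns ab by simp
      have cU: "0 < real (card ?U)" using Uf by (simp add: card_gt_0_iff)
      have "real (card (carrier R)) * real (card (?U \<inter> ?P)) \<le> real (card ?U)"
        using c by (metis of_nat_le_iff of_nat_mult)
      then show ?thesis using cU qpos by (simp add: field_simps)
    qed
    finally show ?thesis using eq by simp
  qed
qed

lemma prob_slot_bad:
  fixes E :: "('v \<times> 'v) set"
  assumes V: "finite V" "E \<subseteq> V \<times> V" "\<forall>e\<in>E. 1 \<le> r e"
    and hi: "hinv R n E r S h" and hl: "length h = t"
  shows "measure_pmf.prob (slot_pmf R n E r S TS stop h)
     {x. \<not> (\<forall>e\<in>E. \<forall>w\<in>V. \<not> Pi_node R n E r S h (fst e) t \<subseteq> Pi_node R n E r S h w t \<longrightarrow>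
               \<not> (\<exists>y. x (e,0) = Some y \<and> y \<in> Pi_node R n E r S h w t))}
     \<le> real (card E * card V) / real (card (carrier R))"
proof -
  have fE: "finite E" using V(1,2) finite_subset by blast
  define BP where "BP = {p \<in> E \<times> V. \<not> Pi_node R n E r S h (fst (fst p)) t \<subseteq> Pi_node R n E r S h (snd p) t}"
  define Ev where "Ev = (\<lambda>p::('v \<times> 'v) \<times> 'v. {x::'v slot. \<exists>y. x (fst p, 0) = Some y \<and> y \<in> Pi_node R n E r S h (snd p) t})"
  have fBP: "finite BP" "BP \<subseteq> E \<times> V" using fE V(1) by (auto simp: BP_def)
  have sub: "{x. \<not> (\<forall>e\<in>E. \<forall>w\<in>V. \<not> Pi_node R n E r S h (fst e) t \<subseteq> Pi_node R n E r S h w t \<longrightarrow>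
               \<not> (\<exists>y. x (e,0) = Some y \<and> y \<in> Pi_node R n E r S h w t))} \<subseteq> (\<Union>p\<in>BP. Ev p)"
    unfolding BP_def Ev_def by force
  let ?M = "slot_pmf R n E r S TS stop h"
  have "measure_pmf.prob ?M {x. \<not> (\<forall>e\<in>E. \<forall>w\<in>V. \<not> Pi_node R n E r S h (fst e) t \<subseteq> Pi_node R n E r S h w t \<longrightarrow>
               \<not> (\<exists>y. x (e,0) = Some y \<and> y \<in> Pi_node R n E r S h w t))} \<le> measure_pmf.prob ?M (\<Union>p\<in>BP. Ev p)"
    by (rule measure_pmf.finite_measure_mono[OF sub]) simp
  also have "\<dots> \<le> (\<Sum>p\<in>BP. measure_pmf.prob ?M (Ev p))"
    by (rule measure_pmf.finite_measure_subadditive_finite) (use fBP in auto)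
  also have "\<dots> \<le> (\<Sum>p\<in>BP. 1 / real (card (carrier R)))"
  proof (rule sum_mono)
    fix p assume p: "p \<in> BP"
    then show "measure_pmf.prob ?M (Ev p) \<le> 1 / real (card (carrier R))"
      unfolding Ev_def using prob_pair[OF fE _ _ hi hl, of "fst p" "snd p" TS stop] V(3)
      by (auto simp: BP_def)
  qed
  also have "\<dots> = real (card BP) / real (card (carrier R))" by simp
  also have "\<dots> \<le> real (card (E \<times> V)) / real (card (carrier R))"
  proof (rule divide_right_mono)
    have "card BP \<le> card (E \<times> V)" using card_mono[OF _ fBP(2)] fE V(1) by simp
    then show "real (card BP) \<le> real (card (E \<times> V))" by (simp only: of_nat_le_iff)
  qed simp
  also have "\<dots> = real (card E * card V) / real (card (carrier R))" by (simp add: card_cartesian_product)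
  finally show ?thesis .
qed

end



theorem theorem4:
  fixes V :: "'v set" and E :: "('v \<times> 'v) set" and S :: 'v
    and r :: "'v \<times> 'v \<Rightarrow> nat" and n t :: nat
  assumes "finite V" and "E \<subseteq> V \<times> V" and "acyclic E"
    and "S \<in> V" and "\<forall>e\<in>E. snd e \<noteq> S"
    and "\<forall>e\<in>E. 1 \<le> r e" and "1 \<le> t"
  shows "\<exists>C::real. \<forall>(R::nat ring) TS (stop :: 'v \<Rightarrow> nat \<Rightarrow> 'v hist \<Rightarrow> bool).
           field R \<and> finite (carrier R) \<and> t + 1 \<le> TS \<longrightarrow>
           measure_pmf.prob (proto R n E r S TS stop (Suc t)) {h. good_event R n V E r S stop t h}
             \<ge> 1 - C / real (card (carrier R))"
proof (intro exI[of _ "real (card E * card V)"] allI impI)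
  fix R :: "nat ring" and TS and stop :: "'v \<Rightarrow> nat \<Rightarrow> 'v hist \<Rightarrow> bool"
  assume a: "field R \<and> finite (carrier R) \<and> t + 1 \<le> TS"
  interpret vsp R n using a by (simp add: vsp_def vsp_axioms_def)
  have fE: "finite E" using assms(1,2) finite_subset by blast
  let ?C = "real (card E * card V) / real (card (carrier R))"
  let ?G = "{h. good_event R n V E r S stop t h}"
  have C0: "0 \<le> ?C" by simp
  have bad: "measure_pmf.prob (proto R n E r S TS stop (Suc t)) (UNIV - ?G) \<le> ?C"
    unfolding proto.simps
  proof (rule bind_pmf_prob_le[OF C0])
    fix h assume h: "h \<in> set_pmf (proto R n E r S TS stop t)"
    have hl: "length h = t" and hi: "hinv R n E r S h" using proto_support[OF fE h] by auto
    let ?M = "slot_pmf R n E r S TS stop h"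
    let ?NX = "{x. \<not> (\<forall>e\<in>E. \<forall>w\<in>V. \<not> Pi_node R n E r S h (fst e) t \<subseteq> Pi_node R n E r S h w t \<longrightarrow>
               \<not> (\<exists>y. x (e,0) = Some y \<and> y \<in> Pi_node R n E r S h w t))}"
    have "measure_pmf.prob (map_pmf (\<lambda>x. h @ [x]) ?M) (UNIV - ?G)
        = measure_pmf.prob ?M {x. \<not> good_event R n V E r S stop t (h @ [x])}"
      by (simp add: vimage_def)
    also have "\<dots> = measure_pmf.prob ?M ({x. \<not> good_event R n V E r S stop t (h @ [x])} \<inter> set_pmf ?M)"
      by (rule measure_Int_set_pmf[symmetric])
    also have "\<dots> \<le> measure_pmf.prob ?M ?NX"
    proof (rule measure_pmf.finite_measure_mono)
      show "{x. \<not> good_event R n V E r S stop t (h @ [x])} \<inter> set_pmf ?M \<subseteq> ?NX"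
      proof
        fix x assume x: "x \<in> {x. \<not> good_event R n V E r S stop t (h @ [x])} \<inter> set_pmf ?M"
        show "x \<in> ?NX"
        proof (rule ccontr)
          assume "x \<notin> ?NX"
          then have nx: "\<forall>e\<in>E. \<forall>w\<in>V. \<not> Pi_node R n E r S h (fst e) t \<subseteq> Pi_node R n E r S h w t \<longrightarrow>
               \<not> (\<exists>y. x (e,0) = Some y \<and> y \<in> Pi_node R n E r S h w t)" by blast
          have "good_event R n V E r S stop t (h @ [x])"
            using slot_good[OF assms(1,2,4,5,6) _ hl hi _ nx] a x by auto
          then show False using x by blast
        qed
      qed
    qed simp
    also have "\<dots> \<le> ?C" by (rule prob_slot_bad[OF assms(1,2,6) hi hl])
    finally show "measure_pmf.prob (map_pmf (\<lambda>x. h @ [x]) ?M) (UNIV - ?G) \<le> ?C" .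
  qed
  have "measure_pmf.prob (proto R n E r S TS stop (Suc t)) ?G
      = 1 - measure_pmf.prob (proto R n E r S TS stop (Suc t)) (UNIV - ?G)"
    using measure_pmf.prob_compl[of "UNIV - ?G" "proto R n E r S TS stop (Suc t)"]
    by (simp add: Diff_Diff_Int)
  then show "measure_pmf.prob (proto R n E r S TS stop (Suc t)) ?G \<ge> 1 - ?C"
    using bad by simp
qed



end
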